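(* For all integers $n\geq 3$, $s_2(n)<1$, where $s_2(n)=g(n-1)+g(n+1)-f(n-1)f(n+1)$.
   Context: For integers $m\geq 2$, with $x=\pi\sqrt{m-1}$, $y=\pi\sqrt{m}$, $z=\pi\sqrt{m+1}$, define \[ f(m)=e^{x-2y+z}\frac{(x^6-x^5-1)\,y^{16}\,(z^6-z^5-1)}{x^8(y^6-y^5+1)^2z^8},\qquad g(m)=e^{x-2y+z}\frac{(x^6-x^5+1)\,y^{16}\,(z^6-z^5+1)}{x^8(y^6-y^5-1)^2z^8}. \] *)

theory Defs
  imports Complex_Main
begin

definition f :: "nat \<Rightarrow> real" where
  "f m = (let x = pi * sqrt (real m - 1); y = pi * sqrt (real m); z = pi * sqrt (real m + 1) in
     exp (x - 2*y + z) * ((x^6 - x^5 - 1) * y^16 * (z^6 - z^5 - 1))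
       / (x^8 * (y^6 - y^5 + 1)^2 * z^8))"

definition g :: "nat \<Rightarrow> real" where
  "g m = (let x = pi * sqrt (real m - 1); y = pi * sqrt (real m); z = pi * sqrt (real m + 1) in
     exp (x - 2*y + z) * ((x^6 - x^5 + 1) * y^16 * (z^6 - z^5 + 1))
       / (x^8 * (y^6 - y^5 - 1)^2 * z^8))"

definition s2 :: "nat \<Rightarrow> real" where
  "s2 n = g (n - 1) + g (n + 1) - f (n - 1) * f (n + 1)"

end

theory Submission imports Defs begin

definition PP :: "real \<Rightarrow> real" where "PP u = u^6 - u^5 - 1"
definition QQ :: "real \<Rightarrow> real" where "QQ u = u^6 - u^5 + 1"

lemma exp_T4: assumes "t \<le> (0::real)" shows "exp t \<le> 1 + t + t^2/2 + t^3/6 + t^4/24"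
proof -
  obtain s where s: "exp t = (\<Sum>m<5. t ^ m / fact m) + exp s / fact 5 * t ^ 5"
    using Maclaurin_exp_le[of t 5] by blast
  have "t^5 \<le> 0" using assms by (simp add: power_le_zero_eq)
  hence "exp s / fact 5 * t ^ 5 \<le> 0" by (intro mult_nonneg_nonpos) auto
  moreover have "(\<Sum>m<5. t ^ m / fact m) = 1 + t + t^2/2 + t^3/6 + t^4/24"
    by (simp add: numeral_eq_Suc fact_numeral)
  ultimately show ?thesis using s by linarith
qed

lemma exp_T2: assumes "t \<le> (0::real)" shows "exp t \<le> 1 + t + t^2/2"
proof -
  obtain s where s: "exp t = (\<Sum>m<3. t ^ m / fact m) + exp s / fact 3 * t ^ 3"
    using Maclaurin_exp_le[of t 3] by blast
  have "t^3 \<le> 0" using assms by (simp add: power_le_zero_eq)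
  hence "exp s / fact 3 * t ^ 3 \<le> 0" by (intro mult_nonneg_nonpos) auto
  moreover have "(\<Sum>m<3. t ^ m / fact m) = 1 + t + t^2/2"
    by (simp add: numeral_eq_Suc fact_numeral)
  ultimately show ?thesis using s by linarith
qed

lemma PP_mono: assumes "1 \<le> u" "u \<le> v" shows "PP u \<le> PP v"
proof -
  have "u^5 * (u - 1) \<le> v^5 * (v - 1)"
    using assms by (intro mult_mono power_mono) auto
  thus ?thesis unfolding PP_def by (simp add: algebra_simps eval_nat_numeral)
qed

lemma QQ_mono: assumes "1 \<le> u" "u \<le> v" shows "QQ u \<le> QQ v"
proof -
  have "u^5 * (u - 1) \<le> v^5 * (v - 1)"
    using assms by (intro mult_mono power_mono) auto
  thus ?thesis unfolding QQ_def by (simp add: algebra_simps eval_nat_numeral)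
qed

lemma PP_pos: assumes "3 \<le> u" shows "0 < PP u"
proof -
  have "3^5 * (3 - 1) \<le> u^5 * (u - (1::real))"
    using assms by (intro mult_mono power_mono) auto
  thus ?thesis unfolding PP_def by (simp add: algebra_simps eval_nat_numeral)
qed

lemma QQ_pos: assumes "1 \<le> u" shows "0 < QQ u"
proof -
  have "0 \<le> u^5 * (u - (1::real))"
    using assms by simp
  thus ?thesis unfolding QQ_def by (simp add: algebra_simps eval_nat_numeral)
qed

lemma sqrt_le_by_sq: "0 \<le> u \<Longrightarrow> k \<le> u^2 \<Longrightarrow> sqrt k \<le> u"
  by (metis real_sqrt_le_mono real_sqrt_abs abs_of_nonneg)
lemma sqrt_ge_by_sq: "l^2 \<le> k \<Longrightarrow> l \<le> sqrt k"
  by (rule real_le_rsqrt)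

lemma f_eq:
  fixes m :: nat assumes m: "m \<ge> 2"
  defines "x \<equiv> pi * sqrt (real m - 1)" and "y \<equiv> pi * sqrt (real m)" and "z \<equiv> pi * sqrt (real m + 1)"
  shows "f m = exp (x - 2*y + z) * (PP x * PP z / (QQ y)^2) * (real m^8 / ((real m - 1)^4 * (real m + 1)^4))"
    and "g m = exp (x - 2*y + z) * (QQ x * QQ z / (PP y)^2) * (real m^8 / ((real m - 1)^4 * (real m + 1)^4))"
proof -
  have m1: "real m - 1 > 0" "real m > 0" using m by auto
  have x2: "x^2 = pi^2 * (real m - 1)" using m1 unfolding x_def by (simp add: power_mult_distrib)
  have y2: "y^2 = pi^2 * real m" using m1 unfolding y_def by (simp add: power_mult_distrib)
  have z2: "z^2 = pi^2 * (real m + 1)" unfolding z_def by (simp add: power_mult_distrib)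
  have x8: "x^8 = pi^8 * (real m - 1)^4"
    by (metis (no_types) x2 power_mult_distrib power_mult[of x 2 4] power_mult[of pi 2 4] num_double numeral_times_numeral)
  have y16: "y^16 = pi^16 * (real m)^8"
    by (metis (no_types) y2 power_mult_distrib power_mult[of y 2 8] power_mult[of pi 2 8] num_double numeral_times_numeral)
  have z8: "z^8 = pi^8 * (real m + 1)^4"
    by (metis (no_types) z2 power_mult_distrib power_mult[of z 2 4] power_mult[of pi 2 4] num_double numeral_times_numeral)
  have C: "y^16 / (x^8 * z^8) = real m^8 / ((real m - 1)^4 * (real m + 1)^4)"
    unfolding x8 y16 z8 using m1 by (simp add: field_simps power_mult_distrib flip: power_add)
  show "f m = exp (x - 2*y + z) * (PP x * PP z / (QQ y)^2) * (real m^8 / ((real m - 1)^4 * (real m + 1)^4))"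
    unfolding C[symmetric] f_def Let_def PP_def QQ_def x_def[symmetric] y_def[symmetric] z_def[symmetric]
    by (simp add: field_simps)
  show "g m = exp (x - 2*y + z) * (QQ x * QQ z / (PP y)^2) * (real m^8 / ((real m - 1)^4 * (real m + 1)^4))"
    unfolding C[symmetric] g_def Let_def PP_def QQ_def x_def[symmetric] y_def[symmetric] z_def[symmetric]
    by (simp add: field_simps)
qed
lemma arctan_bounds:
  fixes x :: real and k :: nat
  assumes "0 < x" "x \<le> 1"
  shows "(\<Sum>i<2*k. (-1)^i * (1 / real (i*2+1) * x^(i*2+1))) \<le> arctan x"
    and "arctan x \<le> (\<Sum>i<2*k+1. (-1)^i * (1 / real (i*2+1) * x^(i*2+1)))"
proof -
  have ax: "\<bar>x\<bar> \<le> 1" using assms by auto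
  note L = summable_Leibniz(2)[OF zeroseq_arctan_series[OF ax] monoseq_arctan_series[OF ax]]
  have "0 < 1 / real (0 * 2 + 1) * x^(0 * 2 + 1)" using assms by simp
  with L have "arctan x \<in> {\<Sum>i<2*k. (-1)^i * (1 / real (i*2+1) * x^(i*2+1)) .. \<Sum>i<2*k+1. (-1)^i * (1 / real (i*2+1) * x^(i*2+1))}"
    using arctan_series[OF ax] by simp
  then show "(\<Sum>i<2*k. (-1)^i * (1 / real (i*2+1) * x^(i*2+1))) \<le> arctan x"
    and "arctan x \<le> (\<Sum>i<2*k+1. (-1)^i * (1 / real (i*2+1) * x^(i*2+1)))" by auto
qed

lemma pi_bounds: "3.14159265 < pi" "pi < 3.14159266"
proof -
  have a1: "(\<Sum>i<2*3. (-1)^i * (1 / real (i*2+1) * (1/5::real)^(i*2+1))) \<le> arctan (1/5)"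
    by (rule arctan_bounds) auto
  have a2: "arctan (1/5) \<le> (\<Sum>i<2*3+1. (-1)^i * (1 / real (i*2+1) * (1/5::real)^(i*2+1)))"
    by (rule arctan_bounds) auto
  have b1: "(\<Sum>i<2*1. (-1)^i * (1 / real (i*2+1) * (1/239::real)^(i*2+1))) \<le> arctan (1/239)"
    by (rule arctan_bounds) auto
  have b2: "arctan (1/239) \<le> (\<Sum>i<2*1+1. (-1)^i * (1 / real (i*2+1) * (1/239::real)^(i*2+1)))"
    by (rule arctan_bounds) auto
  note e = a1 a2 b1 b2
  have m: "pi = 16 * arctan (1/5) - 4 * arctan (1/239)" using machin by simp
  show "3.14159265 < pi" "pi < 3.14159266"
    using e unfolding m by (simp_all add: numeral_eq_Suc)
qed

lemma f_upper:
  fixes m :: nat and au bl cu xu zu yl tu :: real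
  assumes m: "m \<ge> 2" and ha0: "0 \<le> au" "real m - 1 \<le> au^2" and hb0: "bl^2 \<le> real m"
    and hc0: "0 \<le> cu" "real m + 1 \<le> cu^2"
    and hxu: "3.14159266 * au \<le> xu" and hzu: "3.14159266 * cu \<le> zu"
    and hyl: "1 \<le> yl" "yl \<le> 3.14159265 * bl"
    and hdu: "au - 2*bl + cu \<le> 0" and htu: "3.14159265 * (au - 2*bl + cu) \<le> tu" "tu \<le> 0"
  shows "f m \<le> (1 + tu + tu^2/2 + tu^3/6 + tu^4/24) * (PP xu * PP zu / (QQ yl)^2)
                 * (real m^8 / ((real m - 1)^4 * (real m + 1)^4))"
proof -
  have ha: "sqrt (real m - 1) \<le> au" using ha0 by (rule sqrt_le_by_sq)
  have hb: "bl \<le> sqrt (real m)" using hb0 by (rule sqrt_ge_by_sq)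
  have hc: "sqrt (real m + 1) \<le> cu" using hc0 by (rule sqrt_le_by_sq)
  define x where "x = pi * sqrt (real m - 1)"
  define y where "y = pi * sqrt (real m)"
  define z where "z = pi * sqrt (real m + 1)"
  note fe = f_eq(1)[OF m, folded x_def y_def z_def]
  note pb = pi_bounds
  have s1: "1 \<le> sqrt (real m - 1)" using m by simp
  have s2: "1 \<le> sqrt (real m + 1)" using m by simp
  have x3: "3 \<le> x" unfolding x_def using mult_mono[of 3 pi 1 "sqrt (real m - 1)"] s1 pb by simp
  have z3: "3 \<le> z" unfolding z_def using mult_mono[of 3 pi 1 "sqrt (real m + 1)"] s2 pb by simp
  have xle: "x \<le> xu" unfolding x_def using mult_mono[of pi "3.14159266" "sqrt (real m - 1)" au] ha hxu pb s1 by simp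
  have zle: "z \<le> zu" unfolding z_def using mult_mono[of pi "3.14159266" "sqrt (real m + 1)" cu] hc hzu pb s2 by simp
  have "0 < 3.14159265 * bl" using hyl by linarith
  hence bl0: "0 \<le> bl" by (simp add: zero_less_mult_iff)
  have yge: "yl \<le> y" unfolding y_def using mult_mono[of "3.14159265" pi bl "sqrt (real m)"] hb hyl pb bl0 by simp
  have "x - 2*y + z = pi * (sqrt (real m - 1) - 2 * sqrt (real m) + sqrt (real m + 1))"
    unfolding x_def y_def z_def by (simp add: algebra_simps)
  also have "\<dots> \<le> pi * (au - 2*bl + cu)"
    using ha hb hc by (intro mult_left_mono) auto
  also have "\<dots> \<le> 3.14159265 * (au - 2*bl + cu)"
    using hdu pb by (intro mult_right_mono_neg) auto
  also have "\<dots> \<le> tu" by (rule htu(1))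
  finally have "exp (x - 2*y + z) \<le> exp tu" by simp
  also have "\<dots> \<le> 1 + tu + tu^2/2 + tu^3/6 + tu^4/24" using htu(2) by (rule exp_T4)
  finally have E: "exp (x - 2*y + z) \<le> 1 + tu + tu^2/2 + tu^3/6 + tu^4/24" .
  have Px: "0 \<le> PP x" "PP x \<le> PP xu" using PP_pos[OF x3] PP_mono[of x xu] x3 xle by auto
  have Pz: "0 \<le> PP z" "PP z \<le> PP zu" using PP_pos[OF z3] PP_mono[of z zu] z3 zle by auto
  have Qy: "0 < QQ yl" "QQ yl \<le> QQ y" using QQ_pos[OF hyl(1)] QQ_mono[of yl y] hyl yge by auto
  have R: "PP x * PP z / (QQ y)^2 \<le> PP xu * PP zu / (QQ yl)^2"
    apply (rule frac_le)
    using Px Pz Qy by (auto intro!: mult_mono power_mono mult_nonneg_nonneg)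
  have R0: "0 \<le> PP x * PP z / (QQ y)^2" using Px Pz by simp
  have C0: "0 \<le> real m^8 / ((real m - 1)^4 * (real m + 1)^4)" using m by simp
  have "exp (x - 2*y + z) * (PP x * PP z / (QQ y)^2) \<le> (1 + tu + tu^2/2 + tu^3/6 + tu^4/24) * (PP xu * PP zu / (QQ yl)^2)"
    using E R R0 order_trans[OF exp_ge_zero E] by (intro mult_mono) auto
  then show ?thesis unfolding fe using C0 by (rule mult_right_mono)
qed
lemma g_upper:
  fixes m :: nat and al bl cl xl yl zl V :: real
  assumes m: "m \<ge> 2" and ha0: "al^2 \<le> real m - 1" and hb0: "bl^2 \<le> real m"
    and hc0: "cl^2 \<le> real m + 1"
    and hx: "xl \<le> 3.14159265 * al" and hy: "yl \<le> 3.14159265 * bl" and hz: "zl \<le> 3.14159265 * cl"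
    and h3: "3 \<le> xl" "3 \<le> yl" "3 \<le> zl"
    and hV: "(1 + 2 / PP xl) * (1 + 2 / PP zl) * (1 + 2 / PP yl)^2 \<le> 1 + V"
  shows "0 \<le> f m" "g m \<le> f m * (1 + V)"
proof -
  have ha: "al \<le> sqrt (real m - 1)" using ha0 by (rule sqrt_ge_by_sq)
  have hb: "bl \<le> sqrt (real m)" using hb0 by (rule sqrt_ge_by_sq)
  have hc: "cl \<le> sqrt (real m + 1)" using hc0 by (rule sqrt_ge_by_sq)
  define x where "x = pi * sqrt (real m - 1)"
  define y where "y = pi * sqrt (real m)"
  define z where "z = pi * sqrt (real m + 1)"
  note fe = f_eq(1)[OF m, folded x_def y_def z_def]
  note ge = f_eq(2)[OF m, folded x_def y_def z_def]
  note pb = pi_bounds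
  have "0 < 3.14159265 * al" using h3 hx by linarith
  hence al0: "0 \<le> al" by (simp add: zero_less_mult_iff)
  have "0 < 3.14159265 * bl" using h3 hy by linarith
  hence bl0: "0 \<le> bl" by (simp add: zero_less_mult_iff)
  have "0 < 3.14159265 * cl" using h3 hz by linarith
  hence cl0: "0 \<le> cl" by (simp add: zero_less_mult_iff)
  have xge: "xl \<le> x" unfolding x_def using mult_mono[of "3.14159265" pi al "sqrt (real m - 1)"] ha hx pb al0 by simp
  have yge: "yl \<le> y" unfolding y_def using mult_mono[of "3.14159265" pi bl "sqrt (real m)"] hb hy pb bl0 by simp
  have zge: "zl \<le> z" unfolding z_def using mult_mono[of "3.14159265" pi cl "sqrt (real m + 1)"] hc hz pb cl0 by simp
  have Px: "0 < PP xl" "PP xl \<le> PP x" using PP_pos[OF h3(1)] PP_mono[of xl x] h3 xge by auto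
  have Py: "0 < PP yl" "PP yl \<le> PP y" using PP_pos[OF h3(2)] PP_mono[of yl y] h3 yge by auto
  have Pz: "0 < PP zl" "PP zl \<le> PP z" using PP_pos[OF h3(3)] PP_mono[of zl z] h3 zge by auto
  have Qy: "0 < QQ y" using QQ_pos[of y] h3 yge by auto
  have QP: "QQ u = PP u + 2" for u unfolding PP_def QQ_def by simp
  have C0: "0 \<le> real m^8 / ((real m - 1)^4 * (real m + 1)^4)" using m by simp
  show f0: "0 \<le> f m" unfolding fe using Px Pz Qy C0 by simp
  have rx: "1 + 2 / PP x \<le> 1 + 2 / PP xl" using Px by (simp add: frac_le)
  have ry: "1 + 2 / PP y \<le> 1 + 2 / PP yl" using Py by (simp add: frac_le)
  have rz: "1 + 2 / PP z \<le> 1 + 2 / PP zl" using Pz by (simp add: frac_le)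
  have r0: "0 \<le> 1 + 2 / PP x" "0 \<le> 1 + 2 / PP y" "0 \<le> 1 + 2 / PP z"
    using Px Py Pz by (auto intro!: add_nonneg_nonneg)
  have rho: "(1 + 2 / PP x) * (1 + 2 / PP z) * (1 + 2 / PP y)^2 \<le> 1 + V"
    using hV rx ry rz r0
    by (smt (verit) mult_mono power_mono zero_le_power mult_nonneg_nonneg)
  have "g m = f m * ((1 + 2 / PP x) * (1 + 2 / PP z) * (1 + 2 / PP y)^2)"
  proof -
    have p: "PP x > 0" "PP y > 0" "PP z > 0" "PP y + 2 > 0" using Px Py Pz by linarith+
    hence p': "PP x \<noteq> 0" "PP y \<noteq> 0" "PP z \<noteq> 0" "PP y + 2 \<noteq> 0" by auto
    have "real m - 1 \<noteq> 0" "1 + real m \<noteq> 0" using m by auto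
    then show ?thesis unfolding fe ge QP using p' by (simp add: field_simps)
  qed
  also have "\<dots> \<le> f m * (1 + V)" by (rule mult_left_mono[OF rho f0])
  finally show "g m \<le> f m * (1 + V)" .
qed
lemma d_identity: "a^2 = m - 1 \<Longrightarrow> b^2 = m \<Longrightarrow> c^2 = m + 1 \<Longrightarrow> (a - 2*b + c) * ((a+c)*((c+b)*(b+a))) = (-2::real)"
  by algebra

lemma sq_diff_one: fixes x :: real shows "(x - 1) * (x + 1) = x^2 - 1" by (simp add: power2_eq_square algebra_simps)

lemma sqrt_facts:
  fixes m :: nat assumes m: "m \<ge> 2"
  defines "a \<equiv> sqrt (real m - 1)" and "b \<equiv> sqrt (real m)" and "c \<equiv> sqrt (real m + 1)"
  shows "a^2 = real m - 1" "b^2 = real m" "c^2 = real m + 1" "1 \<le> a" "a \<le> b" "b \<le> c"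
    "a + c \<le> 2*b" "a * c \<le> b^2"
proof -
  show a2: "a^2 = real m - 1" and b2: "b^2 = real m" and c2: "c^2 = real m + 1"
    using m unfolding a_def b_def c_def by simp_all
  show "1 \<le> a" using m unfolding a_def by simp
  show "a \<le> b" "b \<le> c" unfolding a_def b_def c_def by simp_all
  have a0: "0 \<le> a" "0 \<le> b" "0 \<le> c" unfolding a_def b_def c_def using m by simp_all
  have e1: "(a+c)^2 = a^2 + c^2 + 2*(a*c)" by (simp add: power2_sum)
  have e2: "0 \<le> a^2 + c^2 - 2*(a*c)" using zero_le_power2[of "a - c"] unfolding power2_diff by simp
  have e3: "(2*b)^2 = 4 * b^2" by simp
  have q1: "(a + c)^2 \<le> (2*b)^2" unfolding e1 e3 using e2 a2 b2 c2 by linarith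
  have "0 \<le> 2*b" using a0 by simp
  with q1 show "a + c \<le> 2*b" by (rule power2_le_imp_le)
  have e4: "(a*c)^2 = a^2 * c^2" by (simp add: power_mult_distrib)
  have e5: "(real m - 1) * (real m + 1) = (real m)^2 - 1" by (rule sq_diff_one)
  have q2: "(a*c)^2 \<le> (b^2)^2" unfolding e4 a2 b2 c2 e5 by simp
  have "0 \<le> b^2" by simp
  with q2 show "a * c \<le> b^2" by (rule power2_le_imp_le)
qed

lemma d_bound:
  fixes m :: nat assumes m: "m \<ge> 2"
  shows "sqrt (real m - 1) - 2 * sqrt (real m) + sqrt (real m + 1) \<le> - 1 / (4 * sqrt (real m)^3)"
proof -
  define a where "a = sqrt (real m - 1)"
  define b where "b = sqrt (real m)"
  define c where "c = sqrt (real m + 1)"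
  note sf = sqrt_facts[OF m, folded a_def b_def c_def]
  have a1: "1 \<le> a" and b1: "1 \<le> b" and c1: "1 \<le> c" using sf by linarith+
  define PI where "PI = (a+c)*((c+b)*(b+a))"
  have PI0: "0 < PI" unfolding PI_def using a1 b1 c1 by simp
  have dP: "(a - 2*b + c) * PI = -2" unfolding PI_def by (rule d_identity) (use sf in auto)
  have "b * (a + c) \<le> b * (2*b)" using sf b1 by (intro mult_left_mono) auto
  hence h1: "(c+b)*(b+a) \<le> 4*b^2" using sf by (simp add: algebra_simps power2_eq_square)
  have "PI \<le> (2*b) * (4*b^2)" unfolding PI_def
    by (rule mult_mono) (use sf h1 a1 b1 c1 in auto)
  hence PIle: "PI \<le> 8 * b^3" by (simp add: power2_eq_square power3_eq_cube)
  have "a - 2*b + c = -2 / PI" using dP PI0 by (simp add: field_simps)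
  also have "\<dots> \<le> -2 / (8 * b^3)"
  proof -
    have "2 / (8 * b^3) \<le> 2 / PI" using PIle PI0 by (intro frac_le) auto
    thus ?thesis by simp
  qed
  also have "\<dots> = - 1 / (4 * b^3)" by simp
  finally show ?thesis unfolding a_def b_def c_def .
qed
lemma ratio_bound:
  fixes x y z :: real
  assumes x3: "3 \<le> x" and y3: "3 \<le> y" and z3: "3 \<le> z" and hc: "2 / y \<le> 1/x + 1/z"
  shows "PP x * PP z / (QQ y)^2 \<le> x^6 * z^6 / y^12"
proof -
  define p where "p = 1/x"
  define q where "q = 1/z"
  define r where "r = 1/y"
  have p: "0 < p" "p \<le> 1/3" unfolding p_def using x3 by (auto simp: field_simps)
  have q: "0 < q" "q \<le> 1/3" unfolding q_def using z3 by (auto simp: field_simps)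
  have r: "0 < r" "r \<le> 1/3" unfolding r_def using y3 by (auto simp: field_simps)
  have pqr: "2*r \<le> p + q" using hc unfolding p_def q_def r_def by simp
  have am: "(1-p)*(1-q) \<le> ((2-p-q)/2)^2"
  proof -
    have "((2-p-q)/2)^2 - (1-p)*(1-q) = ((p-q)/2)^2" by (simp add: power2_eq_square field_simps)
    thus ?thesis using zero_le_power2[of "(p-q)/2"] by linarith
  qed
  have "((2-p-q)/2)^2 \<le> (1-r)^2" using p q r pqr by (intro power_mono) auto
  with am have key: "(1-p)*(1-q) \<le> (1-r)^2" by linarith
  have x0: "x > 0" and y0: "y > 0" and z0: "z > 0" using x3 y3 z3 by auto
  have Px: "PP x \<le> x^6 * (1-p)" unfolding PP_def p_def using x0 by (simp add: field_simps eval_nat_numeral)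
  have Pz: "PP z \<le> z^6 * (1-q)" unfolding PP_def q_def using z0 by (simp add: field_simps eval_nat_numeral)
  have Qy: "y^6 * (1-r) \<le> QQ y" unfolding QQ_def r_def using y0 by (simp add: field_simps eval_nat_numeral)
  have Px0: "0 \<le> PP x" using PP_pos[OF x3] by simp
  have Pz0: "0 \<le> PP z" using PP_pos[OF z3] by simp
  have r1: "0 < 1 - r" using r by simp
  have Qy0: "0 < y^6 * (1-r)" using y0 r1 by simp
  have "PP x * PP z \<le> (x^6 * (1-p)) * (z^6 * (1-q))" using Px Pz Px0 Pz0
    by (intro mult_mono) (auto intro!: mult_nonneg_nonneg simp: p_def q_def)
  also have "\<dots> = x^6 * z^6 * ((1-p)*(1-q))" by (simp add: algebra_simps)
  also have "\<dots> \<le> x^6 * z^6 * (1-r)^2" using key by (intro mult_left_mono) auto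
  finally have num: "PP x * PP z \<le> x^6 * z^6 * (1-r)^2" .
  have den: "(y^6 * (1-r))^2 \<le> (QQ y)^2" using Qy Qy0 by (intro power_mono) auto
  have "PP x * PP z / (QQ y)^2 \<le> x^6 * z^6 * (1-r)^2 / (y^6 * (1-r))^2"
    using num den Qy0 Px0 Pz0 by (intro frac_le) auto
  also have "\<dots> = x^6 * z^6 / y^12"
  proof -
    have e: "(y^6 * (1-r))^2 = y^12 * (1-r)^2" by (simp add: power_mult_distrib flip: power_mult)
    have "(1-r)^2 \<noteq> 0" using r1 by simp
    then show ?thesis unfolding e by simp
  qed
  finally show ?thesis .
qed
lemma XC_gen: fixes w v u p :: real assumes "w > 0" "v > 0" "u > 0" "p > 0"
  shows "p^6 * w^3 * (p^6 * v^3) / (p^12 * u^6) * (u^8 / (w^4 * v^4)) = u^2 / (w * v)"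
  using assms by (simp add: field_simps eval_nat_numeral)

lemma f_general:
  fixes m :: nat assumes m9: "m \<ge> 9"
  shows "f m \<le> 1 - pi / (8 * sqrt (real m)^3)"
proof -
  have m: "m \<ge> 2" using m9 by simp
  define a where "a = sqrt (real m - 1)"
  define b where "b = sqrt (real m)"
  define c where "c = sqrt (real m + 1)"
  define x where "x = pi * a"
  define y where "y = pi * b"
  define z where "z = pi * c"
  define s where "s = pi / (4 * b^3)"
  define C where "C = real m^8 / ((real m - 1)^4 * (real m + 1)^4)"
  note sf = sqrt_facts[OF m, folded a_def b_def c_def]
  have fe: "f m = exp (x - 2*y + z) * (PP x * PP z / (QQ y)^2) * C"
    using f_eq(1)[OF m] unfolding x_def y_def z_def a_def b_def c_def C_def .
  have a1: "1 \<le> a" and b1: "1 \<le> b" and c1: "1 \<le> c" using sf by linarith+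
  have b3: "3 \<le> b" unfolding b_def using m9 real_le_rsqrt[of 3 "real m"] by simp
  have pi3: "3 \<le> pi" using pi_bounds by simp
  have pi4: "pi \<le> 4" using pi_less_4 by simp
  have s0: "0 \<le> s" unfolding s_def using b1 by simp
  have "x - 2*y + z = pi * (a - 2*b + c)" unfolding x_def y_def z_def by (simp add: algebra_simps)
  also have "\<dots> \<le> pi * (- 1 / (4 * b^3))"
    using d_bound[OF m] unfolding a_def[symmetric] b_def[symmetric] c_def[symmetric]
    by (intro mult_left_mono) auto
  also have "\<dots> = - s" unfolding s_def by simp
  finally have "exp (x - 2*y + z) \<le> exp (-s)" by simp
  also have "\<dots> \<le> 1 + (-s) + (-s)^2/2" using s0 by (intro exp_T2) simp
  finally have E: "exp (x - 2*y + z) \<le> 1 - s + s^2/2" by simp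
  have x3: "3 \<le> x" unfolding x_def using mult_mono[of 3 pi 1 a] a1 pi3 by simp
  have y3: "3 \<le> y" unfolding y_def using mult_mono[of 3 pi 1 b] b1 pi3 by simp
  have z3: "3 \<le> z" unfolding z_def using mult_mono[of 3 pi 1 c] c1 pi3 by simp
  have hc0: "2 / b \<le> 1/a + 1/c"
  proof -
    have "4*(a*c) \<le> (a+c)^2" using zero_le_power2[of "a - c"] unfolding power2_diff power2_sum by simp
    also have "\<dots> = (a+c)*(a+c)" by (simp add: power2_eq_square)
    also have "\<dots> \<le> (a+c)*(2*b)" using sf a1 c1 by (intro mult_left_mono) auto
    finally have "2*(a*c) \<le> b*(a+c)" by simp
    then show ?thesis using a1 b1 c1 by (simp add: field_simps)
  qed
  have hc: "2 / y \<le> 1/x + 1/z"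
  proof -
    have "2 / y = (2/b) / pi" unfolding y_def by simp
    also have "\<dots> \<le> (1/a + 1/c) / pi" using hc0 by (intro divide_right_mono) auto
    also have "\<dots> = 1/x + 1/z" unfolding x_def z_def by (simp add: field_simps)
    finally show ?thesis .
  qed
  have R: "PP x * PP z / (QQ y)^2 \<le> x^6 * z^6 / y^12" by (rule ratio_bound[OF x3 y3 z3 hc])
  have R0: "0 \<le> PP x * PP z / (QQ y)^2" using PP_pos[OF x3] PP_pos[OF z3] by simp
  have C0: "0 \<le> C" unfolding C_def using m by simp
  have um: "real m - 1 > 0" using m by simp
  have x6: "x^6 = pi^6 * (real m - 1)^3"
  proof -
    have "x^6 = pi^6 * (a^2)^3" unfolding x_def by (simp add: power_mult_distrib flip: power_mult)
    thus ?thesis using sf by simp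
  qed
  have z6: "z^6 = pi^6 * (real m + 1)^3"
  proof -
    have "z^6 = pi^6 * (c^2)^3" unfolding z_def by (simp add: power_mult_distrib flip: power_mult)
    thus ?thesis using sf by simp
  qed
  have y12: "y^12 = pi^12 * (real m)^6"
  proof -
    have "y^12 = pi^12 * (b^2)^6" unfolding y_def by (simp add: power_mult_distrib flip: power_mult)
    thus ?thesis using sf by simp
  qed
  have XC: "x^6 * z^6 / y^12 * C = (real m)^2 / ((real m - 1) * (real m + 1))"
    unfolding x6 z6 y12 C_def using um XC_gen[of "real m - 1" "real m + 1" "real m" pi] m by simp
  have "f m \<le> (1 - s + s^2/2) * (x^6 * z^6 / y^12) * C"
    unfolding fe using E R R0 C0 order_trans[OF exp_ge_zero E]
    by (intro mult_right_mono mult_mono) auto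
  also have "\<dots> = (1 - s + s^2/2) * ((real m)^2 / ((real m - 1) * (real m + 1)))"
    using XC by (metis mult.assoc)
  also have "\<dots> \<le> 1 - s/2"
  proof -
    define u where "u = real m"
    have u2: "u = b^2" unfolding u_def using sf by simp
    have u9: "9 \<le> u" unfolding u_def using m9 by simp
    have us: "u^2 * s = pi * b / 4" unfolding u2 s_def using b1
      by (simp add: field_simps eval_nat_numeral)
    have b27: "27 \<le> b^3" using power_mono[OF b3, of 3] by simp
    have s27: "s \<le> 1/27" unfolding s_def using b27 pi4 b1 by (simp add: field_simps)
    have pb: "9 \<le> pi * b" using mult_mono[OF pi3 b3] by simp
    have "9/4 * (26/27) \<le> (u^2 * s) * (1 - s)" unfolding us
      using pb s27 by (intro mult_mono) auto
    hence key: "1 - s/2 \<le> u^2 * s * (1 - s) / 2" using s0 by simp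
    have "(1 - s + s^2/2) * u^2 \<le> (1 - s/2) * (u^2 - 1)"
    proof -
      have id: "(1 - s/2)*(u^2-1) - (1 - s + s^2/2)*u^2 = u^2*s*(1-s)/2 - (1 - s/2)"
        by (simp add: field_simps power2_eq_square)
      show ?thesis using id key by linarith
    qed
    moreover have "(u - 1) * (u + 1) = u^2 - 1" by (rule sq_diff_one)
    moreover have "u^2 - 1 > 0" using u9 by (simp add: power2_eq_square) (smt (verit) mult_le_cancel_left1)
    ultimately show ?thesis unfolding u_def[symmetric] by (simp add: field_simps)
  qed
  finally show ?thesis unfolding s_def b_def by simp
qed
lemma pow4_bound: fixes E :: real assumes E0: "0 \<le> E" and E1: "E \<le> 1/20" shows "(1+E)^4 \<le> 1 + 5*E"
proof -
  have e2: "E^2 \<le> E/20" using mult_left_mono[OF E1 E0] by (simp add: power2_eq_square)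
  have e3': "E^3 \<le> E^2" using mult_right_mono[of E 1 "E^2"] E1 by (simp add: power3_eq_cube power2_eq_square)
  have e4': "E^4 \<le> E^3" using mult_right_mono[of E 1 "E^3"] E1 E0 by (simp add: eval_nat_numeral)
  have "(1+E)^4 = 1 + 4*E + 6*E^2 + 4*E^3 + E^4" by (simp add: eval_nat_numeral algebra_simps)
  thus ?thesis using e2 e3' e4' E0 by linarith
qed

lemma g_general:
  fixes m :: nat assumes m9: "m \<ge> 9"
  shows "0 \<le> f m" "g m \<le> f m * (1 + 20 / (729 * (real m - 1)^3))"
proof -
  have m: "m \<ge> 2" using m9 by simp
  define a where "a = sqrt (real m - 1)"
  define w where "w = 3.14159265 * a"
  define V where "V = 20 / (729 * (real m - 1)^3)"
  have a2: "a^2 = real m - 1" unfolding a_def using m by simp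
  have a1: "1 \<le> a" unfolding a_def using m by simp
  have w3: "3 \<le> w" unfolding w_def using a1 by simp
  have w6: "w^6 = 3.14159265^6 * (real m - 1)^3"
  proof -
    have e1: "w^6 = 3.14159265^6 * a^6" unfolding w_def by (rule power_mult_distrib)
    have e2: "a^6 = (a^2)^3" by (simp flip: power_mult)
    show ?thesis unfolding e1 e2 a2 ..
  qed
  have um: "8 \<le> real m - 1" using m9 by simp
  have um3: "512 \<le> (real m - 1)^3" using power_mono[OF um, of 3] by simp
  have p729: "(729::real) \<le> 3.14159265^6" by (simp add: power_divide)
  have w6ge: "729 * (real m - 1)^3 \<le> w^6" unfolding w6 using um3
    by (intro mult_right_mono[OF p729]) (use m in simp)
  have PPw: "w^6 / 2 \<le> PP w"
  proof -
    have "3^5 * (3 - 2) \<le> w^5 * (w - (2::real))"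
      using w3 by (intro mult_mono power_mono) auto
    thus ?thesis unfolding PP_def by (simp add: algebra_simps eval_nat_numeral)
  qed
  define E where "E = 4 / (729 * (real m - 1)^3)"
  have E0: "0 \<le> E" unfolding E_def using um by simp
  have "E \<le> 4 / (729 * 512)" unfolding E_def using um3 m by (intro divide_left_mono) auto
  hence E1: "E \<le> 1/20" by simp
  have w6p: "0 < w^6" using w3 by simp
  have Pw0: "0 < PP w" using PP_pos[OF w3] .
  have "2 / PP w \<le> 2 / (w^6/2)" using PPw w6p Pw0 by (intro divide_left_mono) auto
  also have "\<dots> = 4 / w^6" by simp
  also have "\<dots> \<le> E" unfolding E_def
  proof (rule divide_left_mono)
    show "729 * (real m - 1)^3 \<le> w^6" by (rule w6ge)
    show "0 < w^6 * (729 * (real m - 1)^3)" using w6p um3 m by (intro mult_pos_pos) auto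
  qed simp
  finally have eE: "2 / PP w \<le> E" .
  have "(1 + 2 / PP w) * (1 + 2 / PP w) * (1 + 2 / PP w)^2 = (1 + 2/PP w)^4"
    by (simp add: eval_nat_numeral)
  also have "\<dots> \<le> (1 + E)^4" using eE Pw0 by (intro power_mono) auto
  also have "\<dots> \<le> 1 + 5*E" using E0 E1 by (rule pow4_bound)
  also have "\<dots> = 1 + V" unfolding E_def V_def by simp
  finally have hV: "(1 + 2 / PP w) * (1 + 2 / PP w) * (1 + 2 / PP w)^2 \<le> 1 + V" .
  have hb: "a^2 \<le> real m" and hc: "a^2 \<le> real m + 1" using a2 by simp_all
  have ha: "a^2 \<le> real m - 1" using a2 by simp
  have hw: "w \<le> 3.14159265 * a" unfolding w_def by simp
  show "0 \<le> f m" using g_upper(1)[of m a a a w w w V, OF m ha hb hc hw hw hw w3 w3 w3 hV] .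
  show "g m \<le> f m * (1 + 20 / (729 * (real m - 1)^3))"
    using g_upper(2)[of m a a a w w w V, OF m ha hb hc hw hw hw w3 w3 w3 hV] unfolding V_def .
qed
lemma combine:
  fixes a b A B F1 F2 V1 V2 :: real
  assumes "0 \<le> a" "a \<le> F1" "F1 \<le> 1" "0 \<le> b" "b \<le> F2" "F2 \<le> 1" "0 \<le> V1" "0 \<le> V2"
    "A \<le> a * (1 + V1)" "B \<le> b * (1 + V2)" "F1 * V1 + F2 * V2 < (1 - F1) * (1 - F2)"
  shows "A + B - a * b < 1"
proof -
  have p1: "0 \<le> (F1 - a) * (1 - b + V1)" using assms by (intro mult_nonneg_nonneg) auto
  have p2: "0 \<le> (F2 - b) * (1 - F1 + V2)" using assms by (intro mult_nonneg_nonneg) auto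
  have e1: "(F1 - a) * (1 - b + V1) = ((1-a)*(1-b) - a*V1 - b*V2) - ((1-F1)*(1-b) - F1*V1 - b*V2)"
    by (simp add: algebra_simps)
  have e2: "(F2 - b) * (1 - F1 + V2) = ((1-F1)*(1-b) - F1*V1 - b*V2) - ((1-F1)*(1-F2) - F1*V1 - F2*V2)"
    by (simp add: algebra_simps)
  define X where "X = (1-a)*(1-b) - a*V1 - b*V2"
  define Y where "Y = (1-F1)*(1-b) - F1*V1 - b*V2"
  define Z where "Z = (1-F1)*(1-F2) - F1*V1 - F2*V2"
  have "0 \<le> X - Y" using p1 e1 unfolding X_def Y_def by simp
  moreover have "0 \<le> Y - Z" using p2 e2 unfolding Y_def Z_def by simp
  moreover have "0 < Z" using assms(11) unfolding Z_def by simp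
  ultimately have X0: "0 < X" by simp
  have "A + B \<le> a * (1 + V1) + b * (1 + V2)" using assms(9,10) by simp
  moreover have "a * (1 + V1) + b * (1 + V2) - a*b = 1 - X" unfolding X_def by (simp add: algebra_simps)
  ultimately show ?thesis using X0 by simp
qed

lemma general_case:
  fixes n :: nat assumes n10: "n \<ge> 10"
  shows "s2 n < 1"
proof -
  define m1 where "m1 = n - 1"
  define m2 where "m2 = n + 1"
  have m19: "m1 \<ge> 9" and m29: "m2 \<ge> 9" unfolding m1_def m2_def using n10 by auto
  have rm1: "real m1 = real n - 1" unfolding m1_def using n10 by simp
  have rm2: "real m2 = real n + 1" unfolding m2_def by simp
  define b1 where "b1 = sqrt (real m1)"
  define b2 where "b2 = sqrt (real m2)"
  define F1 where "F1 = 1 - pi / (8 * b1^3)"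
  define F2 where "F2 = 1 - pi / (8 * b2^3)"
  define V1 where "V1 = 20 / (729 * (real m1 - 1)^3)"
  define V2 where "V2 = 20 / (729 * (real m2 - 1)^3)"
  have b1p: "0 < b1" unfolding b1_def using m19 by simp
  have b2p: "0 < b2" unfolding b2_def using m29 by simp
  have fa: "f m1 \<le> F1" unfolding F1_def b1_def by (rule f_general[OF m19])
  have fb: "f m2 \<le> F2" unfolding F2_def b2_def by (rule f_general[OF m29])
  note ga = g_general[OF m19, folded V1_def]
  note gb = g_general[OF m29, folded V2_def]
  have F1le: "F1 \<le> 1" unfolding F1_def using b1p by simp
  have F2le: "F2 \<le> 1" unfolding F2_def using b2p by simp
  define N where "N = real n"
  have N10: "10 \<le> N" unfolding N_def using n10 by simp
  have V1e: "V1 = 20 / (729 * (N - 2)^3)" unfolding V1_def rm1 N_def by simp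
  have V2e: "V2 = 20 / (729 * N^3)" unfolding V2_def rm2 N_def by simp
  have K8: "8 \<le> N - 2" using N10 by simp
  have K3p: "0 < (N - 2)^3" using K8 by simp
  have V10: "0 \<le> V1" and V20: "0 \<le> V2" unfolding V1e V2e using K3p N10 by simp_all
  have N3p: "0 < N^3" using N10 by simp
  have KN3: "(N - 2)^3 \<le> N^3" using K8 by (intro power_mono) auto
  have V21: "V2 \<le> V1" unfolding V1e V2e
  proof (rule divide_left_mono)
    show "729 * (N - 2)^3 \<le> 729 * N^3" using KN3 by simp
    show "0 < 729 * N^3 * (729 * (N - 2)^3)" using K3p N3p by simp
  qed simp
  have lhs: "F1 * V1 + F2 * V2 \<le> 40 / (729 * (N - 2)^3)"
  proof -
    have "F1 * V1 \<le> V1" using F1le V10 mult_right_mono[of F1 1 V1] by simp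
    moreover have "F2 * V2 \<le> V2" using F2le V20 mult_right_mono[of F2 1 V2] by simp
    ultimately show ?thesis using V21 unfolding V1e by simp
  qed
  have bb: "b1 * b2 \<le> N"
  proof -
    have "(b1 * b2)^2 = (N - 1) * (N + 1)" unfolding b1_def b2_def N_def rm1 rm2
      using n10 by (simp add: power_mult_distrib)
    also have "\<dots> = N^2 - 1" by (rule sq_diff_one)
    finally have q: "(b1*b2)^2 \<le> N^2" by simp
    have "0 \<le> N" using N10 by simp
    with q show ?thesis by (rule power2_le_imp_le)
  qed
  have bb3: "(b1 * b2)^3 \<le> N^3" using bb b1p b2p by (intro power_mono) auto
  have rhs: "(1 - F1) * (1 - F2) = pi^2 / (64 * (b1 * b2)^3)"
    unfolding F1_def F2_def by (simp add: power_mult_distrib power2_eq_square)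
  have rhs2: "pi^2 / (64 * N^3) \<le> pi^2 / (64 * (b1 * b2)^3)"
  proof (rule divide_left_mono)
    show "64 * (b1 * b2)^3 \<le> 64 * N^3" using bb3 by simp
    show "0 < 64 * N^3 * (64 * (b1 * b2)^3)" using N3p b1p b2p by simp
  qed simp
  have pi2: "9.8 \<le> pi^2"
  proof -
    have "3.14 \<le> pi" using pi_bounds by simp
    hence b: "3.14^2 \<le> pi^2" by (intro power_mono) auto
    have a: "(9.8::real) \<le> 3.14^2" by (simp add: power2_eq_square)
    show ?thesis using order_trans[OF a b] .
  qed
  have KN: "64 * N^3 \<le> 125 * (N - 2)^3"
  proof -
    have q: "(4*N)^3 \<le> (5*(N-2))^3" using N10 by (intro power_mono) auto
    have "(4*N)^3 = 64 * N^3" "(5*(N-2))^3 = 125 * (N-2)^3"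
      by (simp_all only: power_mult_distrib) simp_all
    with q show ?thesis by simp
  qed
  have key: "40 / (729 * (N - 2)^3) < pi^2 / (64 * N^3)"
  proof -
    have "40 * (64 * N^3) < 9.8 * (729 * (N - 2)^3)" using KN N3p K3p by linarith
    also have "\<dots> \<le> pi^2 * (729 * (N - 2)^3)" using pi2 K3p by (intro mult_right_mono) auto
    finally have "40 * (64 * N^3) < pi^2 * (729 * (N - 2)^3)" .
    thus ?thesis using K3p N3p by (simp add: divide_less_eq less_divide_eq field_simps)
  qed
  have cond: "F1 * V1 + F2 * V2 < (1 - F1) * (1 - F2)" using lhs key rhs2 rhs by linarith
  have "g m1 + g m2 - f m1 * f m2 < 1"
    by (rule combine[OF ga(1) fa F1le gb(1) fb F2le V10 V20 ga(2) gb(2) cond])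
  thus ?thesis unfolding s2_def m1_def m2_def .
qed

lemma fb2: "f 2 \<le> 0.910981"
proof -
  have "f 2 \<le> (1 + (-0.30277512) + (-0.30277512)^2/2 + (-0.30277512)^3/6 + (-0.30277512)^4/24) * (PP 3.1415927 * PP 5.4413982 / (QQ 4.4428829)^2)
                 * (real 2^8 / ((real 2 - 1)^4 * (real 2 + 1)^4))"
    by (rule f_upper[of 2 "1" "1.414213562" "1.732050808"]) (simp_all add: power_divide)
  also have "\<dots> \<le> 0.910981" by (simp add: PP_def QQ_def power_divide)
  finally show ?thesis .
qed

lemma gb2: "0 \<le> f 2" "g 2 \<le> f 2 * (1 + 0.00382455)"
  by (rule g_upper(1)[of 2 "1" "1.414213562" "1.732050807" "3.1415926" "4.4428829" "5.441398" "0.00382455"];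
      simp add: PP_def power_divide)
     (rule g_upper(2)[of 2 "1" "1.414213562" "1.732050807" "3.1415926" "4.4428829" "5.441398" "0.00382455"];
      simp add: PP_def power_divide)

lemma fb3: "f 3 \<le> 0.940416"
proof -
  have "f 3 \<le> (1 + (-0.15672793) + (-0.15672793)^2/2 + (-0.15672793)^3/6 + (-0.15672793)^4/24) * (PP 4.442883 * PP 6.2831854 / (QQ 5.441398)^2)
                 * (real 3^8 / ((real 3 - 1)^4 * (real 3 + 1)^4))"
    by (rule f_upper[of 3 "1.414213563" "1.732050807" "2"]) (simp_all add: power_divide)
  also have "\<dots> \<le> 0.940416" by (simp add: PP_def QQ_def power_divide)
  finally show ?thesis .
qed

lemma gb3: "0 \<le> f 3" "g 3 \<le> f 3 * (1 + 0.00056319)"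
  by (rule g_upper(1)[of 3 "1.414213562" "1.732050807" "2" "4.4428829" "5.441398" "6.2831853" "0.00056319"];
      simp add: PP_def power_divide)
     (rule g_upper(2)[of 3 "1.414213562" "1.732050807" "2" "4.4428829" "5.441398" "6.2831853" "0.00056319"];
      simp add: PP_def power_divide)

lemma fb4: "f 4 \<le> 0.955379"
proof -
  have "f 4 \<le> (1 + (-0.10015778) + (-0.10015778)^2/2 + (-0.10015778)^3/6 + (-0.10015778)^4/24) * (PP 5.4413982 * PP 7.0248148 / (QQ 6.2831853)^2)
                 * (real 4^8 / ((real 4 - 1)^4 * (real 4 + 1)^4))"
    by (rule f_upper[of 4 "1.732050808" "2" "2.236067978"]) (simp_all add: power_divide)
  also have "\<dots> \<le> 0.955379" by (simp add: PP_def QQ_def power_divide)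
  finally show ?thesis .
qed

lemma gb4: "0 \<le> f 4" "g 4 \<le> f 4 * (1 + 0.00019114)"
  by (rule g_upper(1)[of 4 "1.732050807" "2" "2.236067977" "5.441398" "6.2831853" "7.0248147" "0.00019114"];
      simp add: PP_def power_divide)
     (rule g_upper(2)[of 4 "1.732050807" "2" "2.236067977" "5.441398" "6.2831853" "7.0248147" "0.00019114"];
      simp add: PP_def power_divide)

lemma fb5: "f 5 \<le> 0.964839"
proof -
  have "f 5 \<le> (1 + (-0.07114517) + (-0.07114517)^2/2 + (-0.07114517)^3/6 + (-0.07114517)^4/24) * (PP 6.2831854 * PP 7.695299 / (QQ 7.0248147)^2)
                 * (real 5^8 / ((real 5 - 1)^4 * (real 5 + 1)^4))"
    by (rule f_upper[of 5 "2" "2.236067977" "2.449489743"]) (simp_all add: power_divide)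
  also have "\<dots> \<le> 0.964839" by (simp add: PP_def QQ_def power_divide)
  finally show ?thesis .
qed

lemma gb5: "0 \<le> f 5" "g 5 \<le> f 5 * (1 + 0.00008855)"
  by (rule g_upper(1)[of 5 "2" "2.236067977" "2.449489742" "6.2831853" "7.0248147" "7.6952989" "0.00008855"];
      simp add: PP_def power_divide)
     (rule g_upper(2)[of 5 "2" "2.236067977" "2.449489742" "6.2831853" "7.0248147" "7.6952989" "0.00008855"];
      simp add: PP_def power_divide)

lemma fb6: "f 6 \<le> 0.971317"
proof -
  have "f 6 \<le> (1 + (-0.05391033) + (-0.05391033)^2/2 + (-0.05391033)^3/6 + (-0.05391033)^4/24) * (PP 7.0248148 * PP 8.311873 / (QQ 7.6952989)^2)
                 * (real 6^8 / ((real 6 - 1)^4 * (real 6 + 1)^4))"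
    by (rule f_upper[of 6 "2.236067978" "2.449489742" "2.645751312"]) (simp_all add: power_divide)
  also have "\<dots> \<le> 0.971317" by (simp add: PP_def QQ_def power_divide)
  finally show ?thesis .
qed

lemma gb6: "0 \<le> f 6" "g 6 \<le> f 6 * (1 + 0.00004844)"
  by (rule g_upper(1)[of 6 "2.236067977" "2.449489742" "2.645751311" "7.0248147" "7.6952989" "8.3118728" "0.00004844"];
      simp add: PP_def power_divide)
     (rule g_upper(2)[of 6 "2.236067977" "2.449489742" "2.645751311" "7.0248147" "7.6952989" "8.3118728" "0.00004844"];
      simp add: PP_def power_divide)

lemma fb7: "f 7 \<le> 0.975993"
proof -
  have "f 7 \<le> (1 + (-0.0426809) + (-0.0426809)^2/2 + (-0.0426809)^3/6 + (-0.0426809)^4/24) * (PP 7.695299 * PP 8.8857659 / (QQ 8.3118728)^2)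
                 * (real 7^8 / ((real 7 - 1)^4 * (real 7 + 1)^4))"
    by (rule f_upper[of 7 "2.449489743" "2.645751311" "2.828427125"]) (simp_all add: power_divide)
  also have "\<dots> \<le> 0.975993" by (simp add: PP_def QQ_def power_divide)
  finally show ?thesis .
qed

lemma gb7: "0 \<le> f 7" "g 7 \<le> f 7 * (1 + 0.00002944)"
  by (rule g_upper(1)[of 7 "2.449489742" "2.645751311" "2.828427124" "7.6952989" "8.3118728" "8.8857658" "0.00002944"];
      simp add: PP_def power_divide)
     (rule g_upper(2)[of 7 "2.449489742" "2.645751311" "2.828427124" "7.6952989" "8.3118728" "8.8857658" "0.00002944"];
      simp add: PP_def power_divide)

lemma fb8: "f 8 \<le> 0.979504"
proof -
  have "f 8 \<le> (1 + (-0.0348809) + (-0.0348809)^2/2 + (-0.0348809)^3/6 + (-0.0348809)^4/24) * (PP 8.311873 * PP 9.424778 / (QQ 8.8857658)^2)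
                 * (real 8^8 / ((real 8 - 1)^4 * (real 8 + 1)^4))"
    by (rule f_upper[of 8 "2.645751312" "2.828427124" "3"]) (simp_all add: power_divide)
  also have "\<dots> \<le> 0.979504" by (simp add: PP_def QQ_def power_divide)
  finally show ?thesis .
qed

lemma gb8: "0 \<le> f 8" "g 8 \<le> f 8 * (1 + 0.00001925)"
  by (rule g_upper(1)[of 8 "2.645751311" "2.828427124" "3" "8.3118728" "8.8857658" "9.4247779" "0.00001925"];
      simp add: PP_def power_divide)
     (rule g_upper(2)[of 8 "2.645751311" "2.828427124" "3" "8.3118728" "8.8857658" "9.4247779" "0.00001925"];
      simp add: PP_def power_divide)

lemma fb9: "f 9 \<le> 0.982221"
proof -
  have "f 9 \<le> (1 + (-0.02920177) + (-0.02920177)^2/2 + (-0.02920177)^3/6 + (-0.02920177)^4/24) * (PP 8.8857659 * PP 9.9345883 / (QQ 9.4247779)^2)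
                 * (real 9^8 / ((real 9 - 1)^4 * (real 9 + 1)^4))"
    by (rule f_upper[of 9 "2.828427125" "3" "3.162277661"]) (simp_all add: power_divide)
  also have "\<dots> \<le> 0.982221" by (simp add: PP_def QQ_def power_divide)
  finally show ?thesis .
qed

lemma gb9: "0 \<le> f 9" "g 9 \<le> f 9 * (1 + 0.00001328)"
  by (rule g_upper(1)[of 9 "2.828427124" "3" "3.16227766" "8.8857658" "9.4247779" "9.9345882" "0.00001328"];
      simp add: PP_def power_divide)
     (rule g_upper(2)[of 9 "2.828427124" "3" "3.16227766" "8.8857658" "9.4247779" "9.9345882" "0.00001328"];
      simp add: PP_def power_divide)

lemma fb10: "f 10 \<le> 0.984377"
proof -
  have "f 10 \<le> (1 + (-0.02491449) + (-0.02491449)^2/2 + (-0.02491449)^3/6 + (-0.02491449)^4/24) * (PP 9.424778 * PP 10.4194841 / (QQ 9.9345882)^2)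
                 * (real 10^8 / ((real 10 - 1)^4 * (real 10 + 1)^4))"
    by (rule f_upper[of 10 "3" "3.16227766" "3.316624791"]) (simp_all add: power_divide)
  also have "\<dots> \<le> 0.984377" by (simp add: PP_def QQ_def power_divide)
  finally show ?thesis .
qed

lemma gb10: "0 \<le> f 10" "g 10 \<le> f 10 * (1 + 0.00000955)"
  by (rule g_upper(1)[of 10 "3" "3.16227766" "3.31662479" "9.4247779" "9.9345882" "10.419484" "0.00000955"];
      simp add: PP_def power_divide)
     (rule g_upper(2)[of 10 "3" "3.16227766" "3.31662479" "9.4247779" "9.9345882" "10.419484" "0.00000955"];
      simp add: PP_def power_divide)


lemma case3: "s2 3 < 1"
proof -
  have "g 2 + g 4 - f 2 * f 4 < 1"
    by (rule combine[OF gb2(1) fb2 _ gb4(1) fb4 _ _ _ gb2(2) gb4(2)]) simp_all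
  thus ?thesis by (simp add: s2_def)
qed

lemma case4: "s2 4 < 1"
proof -
  have "g 3 + g 5 - f 3 * f 5 < 1"
    by (rule combine[OF gb3(1) fb3 _ gb5(1) fb5 _ _ _ gb3(2) gb5(2)]) simp_all
  thus ?thesis by (simp add: s2_def)
qed

lemma case5: "s2 5 < 1"
proof -
  have "g 4 + g 6 - f 4 * f 6 < 1"
    by (rule combine[OF gb4(1) fb4 _ gb6(1) fb6 _ _ _ gb4(2) gb6(2)]) simp_all
  thus ?thesis by (simp add: s2_def)
qed

lemma case6: "s2 6 < 1"
proof -
  have "g 5 + g 7 - f 5 * f 7 < 1"
    by (rule combine[OF gb5(1) fb5 _ gb7(1) fb7 _ _ _ gb5(2) gb7(2)]) simp_all
  thus ?thesis by (simp add: s2_def)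
qed

lemma case7: "s2 7 < 1"
proof -
  have "g 6 + g 8 - f 6 * f 8 < 1"
    by (rule combine[OF gb6(1) fb6 _ gb8(1) fb8 _ _ _ gb6(2) gb8(2)]) simp_all
  thus ?thesis by (simp add: s2_def)
qed

lemma case8: "s2 8 < 1"
proof -
  have "g 7 + g 9 - f 7 * f 9 < 1"
    by (rule combine[OF gb7(1) fb7 _ gb9(1) fb9 _ _ _ gb7(2) gb9(2)]) simp_all
  thus ?thesis by (simp add: s2_def)
qed

lemma case9: "s2 9 < 1"
proof -
  have "g 8 + g 10 - f 8 * f 10 < 1"
    by (rule combine[OF gb8(1) fb8 _ gb10(1) fb10 _ _ _ gb8(2) gb10(2)]) simp_all
  thus ?thesis by (simp add: s2_def)
qed

theorem theorem2p5:
  fixes n :: nat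
  assumes "n \<ge> 3"
  shows "s2 n < 1"
proof -
  consider "n = 3" | "n = 4" | "n = 5" | "n = 6" | "n = 7" | "n = 8" | "n = 9" | "n \<ge> 10"
    using assms by linarith
  then show ?thesis
    by cases (simp_all add: case3 case4 case5 case6 case7 case8 case9 general_case)
qed

end
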